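(* There exists a constant $C>0$ such that for every integer $m\ge 5$ there exist a number of voters $n$, a distribution $\mathcal{D}$ supported on $[0,1]$, and a preference profile $\sigma$ on $n$ voters and $m$ alternatives such that every expected-welfare-maximizing rule $f$ for $\mathcal{D}$ satisfies $$\mathbb{E}[\mathrm{dist}(f(\sigma),\sigma)]\le \frac{C}{m}\cdot\max_{j\in A}\mathbb{E}[\mathrm{dist}(j,\sigma)].$$
   Context: There are $n$ voters $N=\{1,\dots,n\}$ and $m$ alternatives $A=\{1,\dots,m\}$. A preference profile $\sigma=(\sigma_1,\dots,\sigma_n)$ consists of a ranking of $A$ for each voter; position $1$ is the top. A (deterministic) voting rule $f$ maps each preference profile to an alternative. Given a distribution $\mathcal{D}$ and a profile $\sigma$, a random utility profile $u$ consistent with $\sigma$ is generated as follows: independently for each voter $i$, draw $m$ i.i.d. samples from $\mathcal{D}$ and assign them, from highest to lowest, to the alternatives in the order of $\sigma_i$. The social welfare of alternative $j$ is $\mathrm{sw}(j,u)=\sum_{i}u_{ij}$; expectations are over this random $u$. The distortion of $j$ at $\sigma$ is $\mathrm{dist}(j,\sigma)=\mathrm{sw}(j,u)/\max_{k\in A}\mathrm{sw}(k,u)$. A rule is an expected-welfare-maximizing rule for $\mathcal{D}$ if for every profile $\sigma$ it selects an alternative maximizing $\mathbb{E}[\mathrm{sw}(j,u)]$ over $j\in A$. *)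

theory Defs
  imports "HOL-Probability.Probability"
begin

text \<open>Voters are 1..n, alternatives 1..m, positions 1..m (position 1 = top).
A profile is represented by sigma :: nat => nat => nat, where sigma i p is the
alternative voter i ranks at position p.\<close>

definition is_profile :: "nat \<Rightarrow> nat \<Rightarrow> (nat \<Rightarrow> nat \<Rightarrow> nat) \<Rightarrow> bool" where
  "is_profile n m \<sigma> \<longleftrightarrow> (\<forall>i\<in>{1..n}. bij_betw (\<sigma> i) {1..m} {1..m})"

definition pos :: "nat \<Rightarrow> (nat \<Rightarrow> nat \<Rightarrow> nat) \<Rightarrow> nat \<Rightarrow> nat \<Rightarrow> nat" where
  "pos m \<sigma> i j = the_inv_into {1..m} (\<sigma> i) j"

definition kth_largest :: "nat \<Rightarrow> (nat \<Rightarrow> real) \<Rightarrow> nat \<Rightarrow> real" where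
  "kth_largest m y p = rev (sort (map y [1..<m+1])) ! (p - 1)"

definition sample_space :: "nat \<Rightarrow> nat \<Rightarrow> real measure \<Rightarrow> (nat \<times> nat \<Rightarrow> real) measure" where
  "sample_space n m D = PiM ({1..n} \<times> {1..m}) (\<lambda>_. D)"

text \<open>Utility u_ij: the samples of voter i, sorted from highest to lowest, are
assigned to the alternatives in the order of sigma i.\<close>
definition util :: "nat \<Rightarrow> (nat \<Rightarrow> nat \<Rightarrow> nat) \<Rightarrow> (nat \<times> nat \<Rightarrow> real) \<Rightarrow> nat \<Rightarrow> nat \<Rightarrow> real" where
  "util m \<sigma> x i j = kth_largest m (\<lambda>k. x (i, k)) (pos m \<sigma> i j)"

definition sw :: "nat \<Rightarrow> nat \<Rightarrow> (nat \<Rightarrow> nat \<Rightarrow> nat) \<Rightarrow> (nat \<times> nat \<Rightarrow> real) \<Rightarrow> nat \<Rightarrow> real" where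
  "sw n m \<sigma> x j = (\<Sum>i\<in>{1..n}. util m \<sigma> x i j)"

definition max_sw :: "nat \<Rightarrow> nat \<Rightarrow> (nat \<Rightarrow> nat \<Rightarrow> nat) \<Rightarrow> (nat \<times> nat \<Rightarrow> real) \<Rightarrow> real" where
  "max_sw n m \<sigma> x = Max ((\<lambda>k. sw n m \<sigma> x k) ` {1..m})"

definition dist_alt :: "nat \<Rightarrow> nat \<Rightarrow> (nat \<Rightarrow> nat \<Rightarrow> nat) \<Rightarrow> (nat \<times> nat \<Rightarrow> real) \<Rightarrow> nat \<Rightarrow> real" where
  "dist_alt n m \<sigma> x j = sw n m \<sigma> x j / max_sw n m \<sigma> x"

definition exp_sw :: "nat \<Rightarrow> nat \<Rightarrow> real measure \<Rightarrow> (nat \<Rightarrow> nat \<Rightarrow> nat) \<Rightarrow> nat \<Rightarrow> real" where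
  "exp_sw n m D \<sigma> j = (\<integral>x. sw n m \<sigma> x j \<partial>sample_space n m D)"

definition exp_dist :: "nat \<Rightarrow> nat \<Rightarrow> real measure \<Rightarrow> (nat \<Rightarrow> nat \<Rightarrow> nat) \<Rightarrow> nat \<Rightarrow> real" where
  "exp_dist n m D \<sigma> j = (\<integral>x. dist_alt n m \<sigma> x j \<partial>sample_space n m D)"

definition ewm_rule :: "nat \<Rightarrow> nat \<Rightarrow> real measure \<Rightarrow> ((nat \<Rightarrow> nat \<Rightarrow> nat) \<Rightarrow> nat) \<Rightarrow> bool" where
  "ewm_rule n m D f \<longleftrightarrow> (\<forall>\<sigma>. is_profile n m \<sigma> \<longrightarrow>
      f \<sigma> \<in> {1..m} \<and> (\<forall>j\<in>{1..m}. exp_sw n m D \<sigma> j \<le> exp_sw n m D \<sigma> (f \<sigma>)))"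

definition distr_on_unit :: "real measure \<Rightarrow> bool" where
  "distr_on_unit D \<longleftrightarrow> prob_space D \<and> sets D = sets borel \<and> measure D {0..1} = 1"

end

theory Submission
  imports Defs
begin

lemma sorted_nth_ge_iff:
  fixes ys :: "real list" and \<theta> :: real
  assumes "sorted ys" "length ys = m" "1 \<le> p" "p \<le> m"
  shows "\<theta> \<le> ys ! (m - p) \<longleftrightarrow> p \<le> card {i. i < m \<and> \<theta> \<le> ys ! i}"
proof
  assume h: "\<theta> \<le> ys ! (m - p)"
  have "{m-p..<m} \<subseteq> {i. i < m \<and> \<theta> \<le> ys ! i}"
  proof
    fix i assume "i \<in> {m-p..<m}"
    then have "ys ! (m-p) \<le> ys ! i" using assms by (auto intro: sorted_nth_mono)
    with h `i \<in> _` show "i \<in> {i. i < m \<and> \<theta> \<le> ys ! i}" by auto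
  qed
  from card_mono[OF _ this] show "p \<le> card {i. i < m \<and> \<theta> \<le> ys ! i}" using assms by auto
next
  assume h: "p \<le> card {i. i < m \<and> \<theta> \<le> ys ! i}"
  show "\<theta> \<le> ys ! (m - p)"
  proof (rule ccontr)
    assume "\<not> \<theta> \<le> ys ! (m - p)"
    then have "{i. i < m \<and> \<theta> \<le> ys ! i} \<subseteq> {m-p+1..<m}"
    proof (intro subsetI)
      fix i assume a: "\<not> \<theta> \<le> ys ! (m - p)" "i \<in> {i. i < m \<and> \<theta> \<le> ys ! i}"
      show "i \<in> {m-p+1..<m}"
      proof (rule ccontr)
        assume "i \<notin> {m-p+1..<m}"
        then have "i \<le> m - p" using a by auto
        then have "ys ! i \<le> ys ! (m-p)" using assms by (auto intro: sorted_nth_mono)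
        with a show False by auto
      qed
    qed
    from card_mono[OF _ this] have "card {i. i < m \<and> \<theta> \<le> ys ! i} \<le> p - 1" using assms by auto
    with h assms show False by auto
  qed
qed

lemma kth_ge_iff:
  assumes "1 \<le> p" "p \<le> m"
  shows "\<theta> \<le> kth_largest m y p \<longleftrightarrow> p \<le> card {k\<in>{1..m}. \<theta> \<le> y k}"
proof -
  define xs where "xs = map y [1..<m+1]"
  define ys where "ys = sort xs"
  have len: "length ys = m" by (simp add: ys_def xs_def)
  have "kth_largest m y p = ys ! (m - p)"
    unfolding kth_largest_def xs_def[symmetric] ys_def[symmetric] using assms len
    by (simp add: rev_nth)
  moreover have "card {i. i < m \<and> \<theta> \<le> ys ! i} = length (filter (\<lambda>v. \<theta> \<le> v) ys)"
    using len by (simp add: length_filter_conv_card)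
  moreover have "length (filter (\<lambda>v. \<theta> \<le> v) ys) = length (filter (\<lambda>v. \<theta> \<le> v) xs)"
    unfolding ys_def by (metis mset_filter mset_sort size_mset)
  moreover have "length (filter (\<lambda>v. \<theta> \<le> v) xs) = card {k\<in>{1..m}. \<theta> \<le> y k}"
  proof -
    have "length (filter (\<lambda>v. \<theta> \<le> v) xs) = length (filter (\<lambda>k. \<theta> \<le> y k) [1..<m+1])"
      by (simp add: xs_def filter_map comp_def del: upt_Suc)
    also have "\<dots> = card ({k. \<theta> \<le> y k} \<inter> set [1..<m+1])"
      by (rule distinct_length_filter) simp
    also have "{k. \<theta> \<le> y k} \<inter> set [1..<m+1] = {k\<in>{1..m}. \<theta> \<le> y k}" by auto
    finally show ?thesis .
  qed
  ultimately show ?thesis using sorted_nth_ge_iff[of ys m p \<theta>] len assms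
    by (simp add: ys_def)
qed

lemma kth_mem:
  assumes "1 \<le> p" "p \<le> m"
  shows "kth_largest m y p \<in> y ` {1..m}"
proof -
  have "rev (sort (map y [1..<m+1])) ! (p - 1) \<in> set (rev (sort (map y [1..<m+1])))"
    using assms by (intro nth_mem) simp
  then show ?thesis unfolding kth_largest_def by auto
qed

lemma kth_cong:
  assumes "\<And>k. k \<in> {1..m} \<Longrightarrow> y k = z k"
  shows "kth_largest m y p = kth_largest m z p"
proof -
  have "map y [1..<m+1] = map z [1..<m+1]" using assms by (intro map_cong) auto
  then show ?thesis unfolding kth_largest_def by (simp only:)
qed


definition cnt :: "nat \<Rightarrow> real \<Rightarrow> (nat \<Rightarrow> real) \<Rightarrow> nat" where
  "cnt m \<theta> y = card {k\<in>{1..m}. \<theta> \<le> y k}"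

lemma cnt_real: "real (cnt m \<theta> y) = (\<Sum>k\<in>{1..m}. of_bool (\<theta> \<le> y k))"
  unfolding cnt_def by (simp add: Int_def conj_commute)

lemma cnt_le: "cnt m \<theta> y \<le> m"
  unfolding cnt_def by (rule order.trans[OF card_mono[of "{1..m}"]]) auto

lemma measurable_cnt_ge[measurable]:
  assumes [measurable]: "\<And>k. k \<in> {1..m} \<Longrightarrow> g k \<in> borel_measurable M"
  shows "Measurable.pred M (\<lambda>x. p \<le> cnt m \<theta> (\<lambda>k. g k x))"
proof -
  have "(\<lambda>x. p \<le> cnt m \<theta> (\<lambda>k. g k x)) = (\<lambda>x. real p \<le> (\<Sum>k\<in>{1..m}. of_bool (\<theta> \<le> g k x)))"
    by (subst cnt_real[symmetric]) simp
  also have "Measurable.pred M \<dots>" by measurable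
  finally show ?thesis .
qed

lemma measurable_kth[measurable]:
  assumes [measurable]: "\<And>k. k \<in> {1..m} \<Longrightarrow> g k \<in> borel_measurable M" and p: "1 \<le> p" "p \<le> m"
  shows "(\<lambda>x. kth_largest m (\<lambda>k. g k x) p) \<in> borel_measurable M"
  unfolding borel_measurable_iff_ge
proof
  fix \<theta>
  have "{w \<in> space M. \<theta> \<le> kth_largest m (\<lambda>k. g k w) p} = {w \<in> space M. p \<le> cnt m \<theta> (\<lambda>k. g k w)}"
    using kth_ge_iff[OF p] by (auto simp: cnt_def)
  also have "\<dots> \<in> sets M" by measurable
  finally show "{w \<in> space M. \<theta> \<le> kth_largest m (\<lambda>k. g k w) p} \<in> sets M" .
qed


locale cst = fixes m :: nat assumes m5: "5 \<le> m"
begin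

definition tt :: nat where "tt = m^3"
definition nv :: nat where "nv = (m - 1) * tt"
definition rr :: real where "rr = 1 / (real nv * (real m)^2)"
definition aa :: real where "aa = rr / (4 * real m)"
definition ee :: real where "ee = aa / real m"
definition ss :: real where "ss = 4 / real m"
definition PP :: "real pmf" where "PP = pmf_of_list [(ee, 1 - ss - rr), (aa, ss), (1, rr)]"
definition DD :: "real measure" where "DD = distr (measure_pmf PP) borel (\<lambda>x. x)"

lemma m_pos: "real m \<ge> 5" using m5 by simp
lemma tt_ge: "tt \<ge> 125" unfolding tt_def using power_mono[OF m5, of 3] by simp
lemma nv_ge: "real nv \<ge> 4 * real tt"
proof -
  have "real m - 1 \<ge> 4" using m5 by simp
  then have "4 * real tt \<le> (real m - 1) * real tt" by (intro mult_right_mono) auto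
  then show ?thesis unfolding nv_def using m5 by (simp add: of_nat_diff)
qed
lemma nv_pos: "nv > 0" using nv_ge tt_ge by linarith
lemma rr_pos: "rr > 0" unfolding rr_def using nv_pos m5 by simp
lemma rr_small: "rr \<le> 1/100"
proof -
  have a: "real nv \<ge> 100" using nv_ge tt_ge by linarith
  have b: "(real m)^2 \<ge> 1" using m_pos by (intro one_le_power) simp
  have "real nv * (real m)^2 \<ge> 100 * 1" by (rule mult_mono) (use a b in auto)
  then show ?thesis unfolding rr_def by (simp add: field_simps)
qed
lemma aa_pos: "aa > 0" unfolding aa_def using rr_pos m5 by simp
lemma ee_pos: "ee > 0" unfolding ee_def using aa_pos m5 by simp
lemma ee_lt_aa: "ee < aa" unfolding ee_def using aa_pos m_pos by (simp add: field_simps)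
lemma aa_lt_rr: "aa < rr" unfolding aa_def using rr_pos m_pos by (simp add: field_simps)
lemma aa_lt_1: "aa < 1" using aa_lt_rr rr_small by linarith
lemma ss_bounds: "ss > 0" "ss \<le> 4/5" unfolding ss_def using m_pos by (auto simp: field_simps)

lemma wf: "pmf_of_list_wf [(ee, 1 - ss - rr), (aa, ss), (1, rr)]"
  using ss_bounds rr_small rr_pos by (intro pmf_of_list_wfI) auto

lemma sets_DD[measurable_cong, simp]: "sets DD = sets borel" unfolding DD_def by simp
lemma space_DD[simp]: "space DD = UNIV" unfolding DD_def by simp
lemma prob_space_DD: "prob_space DD"
  unfolding DD_def by (intro prob_space.prob_space_distr measure_pmf.prob_space_axioms) simp

lemma measure_DD: "A \<in> sets borel \<Longrightarrow> measure DD A = sum_list (map snd (filter (\<lambda>x. fst x \<in> A) [(ee, 1 - ss - rr), (aa, ss), (1, rr)]))"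
proof -
  assume "A \<in> sets borel"
  then have "measure DD A = measure_pmf.prob PP A" by (simp add: DD_def measure_distr)
  also have "\<dots> = sum_list (map snd (filter (\<lambda>x. fst x \<in> A) [(ee, 1 - ss - rr), (aa, ss), (1, rr)]))"
    unfolding PP_def by (rule measure_pmf_of_list[OF wf])
  finally show ?thesis .
qed

lemma DD_1: "measure DD {x. 1 \<le> x} = rr"
  using ee_lt_aa aa_lt_1 by (subst measure_DD) auto
lemma DD_a: "measure DD {x. aa \<le> x} = ss + rr"
  using ee_lt_aa aa_lt_1 by (subst measure_DD) auto
lemma DD_lt_a: "measure DD {x. x < aa} = 1 - ss - rr"
  using ee_lt_aa aa_lt_1 by (subst measure_DD) auto
lemma DD_unit: "measure DD {0..1} = 1"
  using ee_lt_aa aa_lt_1 ee_pos by (subst measure_DD) auto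

lemma distr_on_unit_DD: "distr_on_unit DD"
  unfolding distr_on_unit_def using prob_space_DD DD_unit by simp

lemma AE_DD: "AE x in DD. x \<in> {ee, aa, 1}"
proof -
  have "AE x in measure_pmf PP. x \<in> {ee, aa, 1}"
    by (rule AE_pmfI) (use set_pmf_of_list[OF wf] in \<open>auto simp: PP_def\<close>)
  then show ?thesis unfolding DD_def
    by (subst AE_distr_iff) auto
qed

end

context cst begin

definition Om1 :: "(nat \<Rightarrow> real) measure" where "Om1 = PiM {1..m} (\<lambda>_. DD)"

lemma prob_space_Om1: "prob_space Om1" unfolding Om1_def by (intro prob_space_PiM prob_space_DD)
lemma space_Om1: "space Om1 = PiE {1..m} (\<lambda>_. UNIV)" by (simp add: Om1_def space_PiM)

lemma comp_Om1[measurable]: "k \<in> {1..m} \<Longrightarrow> (\<lambda>y. y k) \<in> borel_measurable Om1"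
proof -
  assume k: "k \<in> {1..m}"
  have "(\<lambda>y. y k) \<in> measurable Om1 DD" unfolding Om1_def using k by (rule measurable_component_singleton)
  then show ?thesis using measurable_cong_sets[OF refl sets_DD, of Om1] by simp
qed

lemma measure_Om1_PiE:
  assumes "\<And>k. k \<in> {1..m} \<Longrightarrow> A k \<in> sets borel"
  shows "measure Om1 (PiE {1..m} A) = (\<Prod>k\<in>{1..m}. measure DD (A k))"
proof -
  interpret D: prob_space DD by (rule prob_space_DD)
  interpret product_prob_space "\<lambda>_::nat. DD" by (intro product_prob_spaceI prob_space_DD)
  have "emeasure Om1 (PiE {1..m} A) = (\<Prod>k\<in>{1..m}. emeasure DD (A k))"
    unfolding Om1_def by (rule emeasure_PiM) (use assms in auto)
  also have "\<dots> = ennreal (\<Prod>k\<in>{1..m}. measure DD (A k))"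
    by (simp add: D.emeasure_eq_measure prod_ennreal)
  finally show ?thesis by (simp add: measure_def prod_nonneg)
qed

lemma measure_Om1_single:
  assumes "k \<in> {1..m}" "A \<in> sets borel"
  shows "measure Om1 {y\<in>space Om1. y k \<in> A} = measure DD A"
proof -
  have "{y\<in>space Om1. y k \<in> A} = PiE {1..m} (\<lambda>j. if j = k then A else UNIV)"
    using assms by (auto simp: space_Om1 PiE_iff extensional_def split: if_splits)
  also have "measure Om1 \<dots> = (\<Prod>j\<in>{1..m}. measure DD (if j = k then A else UNIV))"
    using assms by (intro measure_Om1_PiE) auto
  also have "\<dots> = (\<Prod>j\<in>{1..m}. if j = k then measure DD A else 1)"
    using prob_space.prob_space[OF prob_space_DD] by (intro prod.cong) auto
  also have "\<dots> = measure DD A" using assms by (simp add: prod.delta')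
  finally show ?thesis .
qed

lemma integral_of_bool_Om1:
  assumes [measurable]: "Measurable.pred Om1 P"
  shows "integral\<^sup>L Om1 (\<lambda>y. of_bool (P y)) = measure Om1 {y\<in>space Om1. P y}"
proof -
  interpret prob_space Om1 by (rule prob_space_Om1)
  have "integral\<^sup>L Om1 (\<lambda>y. of_bool (P y)) = integral\<^sup>L Om1 (indicator {y\<in>space Om1. P y})"
    by (intro Bochner_Integration.integral_cong) (auto simp: indicator_def)
  also have "\<dots> = measure Om1 {y\<in>space Om1. P y}"
    using Bochner_Integration.integral_indicator[of Om1 "{y\<in>space Om1. P y}"] by (simp add: Int_absorb2)
  finally show ?thesis .
qed

lemma AE_Om1: "AE y in Om1. \<forall>k\<in>{1..m}. y k \<in> {ee, aa, 1}"
  unfolding Om1_def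
  by (intro AE_finite_allI AE_PiM_component[where P="\<lambda>x. x \<in> {ee,aa,1}"] prob_space_DD AE_DD) auto

abbreviation La where "La y \<equiv> cnt m aa y"
abbreviation L1 where "L1 y \<equiv> cnt m 1 y"

lemma m_rr: "real m * rr \<le> 1"
proof -
  have "1 * 1 \<le> real nv * real m" using nv_pos m5 by (intro mult_mono) auto
  then have "real m \<le> real nv * (real m)^2"
    using m5 by (simp add: power2_eq_square)
  then show ?thesis unfolding rr_def using nv_pos m5 by (simp add: field_simps)
qed

lemma numeric_p2:
  defines "q \<equiv> 1 - ss - rr"
  shows "q ^ m + real m * (ss + rr) * q ^ (m - 1) \<le> 1/2"
proof -
  have q0: "q \<ge> 0" using ss_bounds rr_small by (simp add: q_def)
  have q1: "q \<le> exp (- (4 / real m))"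
    using exp_ge_add_one_self[of "- (4 / real m)"] rr_pos by (simp add: q_def ss_def)
  have "q ^ (m - 1) \<le> exp (- (4 / real m)) ^ (m - 1)" by (intro power_mono q1 q0)
  also have "\<dots> = exp (real (m - 1) * (- (4 / real m)))" by (rule exp_of_nat_mult[symmetric])
  also have "\<dots> \<le> exp (- (16/5))"
  proof -
    have "real (m - 1) * (4 / real m) = 4 - 4 / real m" using m5 by (simp add: of_nat_diff field_simps)
    moreover have "4 / real m \<le> 4/5" using m_pos by (simp add: field_simps)
    ultimately have "real (m - 1) * (4 / real m) \<ge> 16/5" by linarith
    then have "real (m - 1) * (- (4 / real m)) \<le> - (16/5)" by (simp only: mult_minus_right)
    then show ?thesis by (simp only: exp_le_cancel_iff)
  qed
  also have "exp (- (16/5)) \<le> (1::real) / 12"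
  proof -
    have "exp (8/5::real) \<ge> 1 + 8/5 + (8/5)^2/2" by (rule exp_lower_Taylor_quadratic) simp
    then have "exp (8/5::real) ^ 2 \<ge> (1 + 8/5 + (8/5)^2/2) ^ 2" by (intro power_mono) auto
    moreover have "exp (8/5::real) ^ 2 = exp (16/5)" by (simp add: exp_of_nat_mult[symmetric])
    moreover have "(12::real) \<le> (1 + 8/5 + (8/5)^2/2) ^ 2" by (simp add: power2_eq_square)
    ultimately have "exp (16/5::real) \<ge> 12" by linarith
    then show ?thesis by (simp add: exp_minus field_simps)
  qed
  finally have A: "q ^ (m - 1) \<le> 1/12" .
  have "q ^ m = q * q ^ (m - 1)" using m5 by (simp add: power_eq_if)
  also have "\<dots> \<le> 1 * q ^ (m - 1)"
    using q0 ss_bounds rr_pos by (intro mult_right_mono) (auto simp: q_def)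
  finally have B: "q ^ m \<le> q ^ (m - 1)" by simp
  have C: "real m * (ss + rr) \<le> 5" using m_rr m_pos by (simp add: ss_def field_simps)
  have "q ^ m + real m * (ss + rr) * q ^ (m - 1) \<le> q ^ (m - 1) + 5 * q ^ (m - 1)"
    using B C q0 by (intro add_mono mult_right_mono) auto
  also have "\<dots> \<le> 1/2" using A by simp
  finally show ?thesis .
qed

end

context cst begin

lemma pred_cnt_Om1[measurable]: "Measurable.pred Om1 (\<lambda>y. p \<le> cnt m \<theta> y)"
  using measurable_cnt_ge[of m "\<lambda>k y. y k" Om1 p \<theta>] by simp

lemma kth_Om1[measurable]: "1 \<le> p \<Longrightarrow> p \<le> m \<Longrightarrow> (\<lambda>y. kth_largest m y p) \<in> borel_measurable Om1"
  using measurable_kth[of m "\<lambda>k y. y k" Om1 p] by simp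

lemma PiE_Om1[measurable]: "(\<And>k. k \<in> {1..m} \<Longrightarrow> A k \<in> sets borel) \<Longrightarrow> PiE {1..m} A \<in> sets Om1"
  unfolding Om1_def by (intro sets_PiM_I_finite) auto

lemma prob_La2: "measure Om1 {y\<in>space Om1. 2 \<le> La y} \<ge> 1/2"
proof -
  interpret prob_space Om1 by (rule prob_space_Om1)
  define q where "q = 1 - ss - rr"
  define Q0 where "Q0 = PiE {1..m} (\<lambda>_. {x::real. x < aa})"
  define Q1 where "Q1 = (\<lambda>k. PiE {1..m} (\<lambda>j. if j = k then {x::real. aa \<le> x} else {x. x < aa}))"
  have [measurable]: "Q0 \<in> sets Om1" unfolding Q0_def by measurable
  have [measurable]: "Q1 k \<in> sets Om1" for k unfolding Q1_def by (intro PiE_Om1) auto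
  have sub: "space Om1 - {y\<in>space Om1. 2 \<le> La y} \<subseteq> Q0 \<union> (\<Union>k\<in>{1..m}. Q1 k)"
  proof
    fix y assume y: "y \<in> space Om1 - {y\<in>space Om1. 2 \<le> La y}"
    define S where "S = {k\<in>{1..m}. aa \<le> y k}"
    have cS: "card S \<le> 1" using y by (auto simp: S_def cnt_def)
    have fS: "finite S" by (simp add: S_def)
    have ext: "y \<in> extensional {1..m}" using y by (auto simp: space_Om1 PiE_def)
    show "y \<in> Q0 \<union> (\<Union>k\<in>{1..m}. Q1 k)"
    proof (cases "S = {}")
      case True
      have "\<forall>j\<in>{1..m}. y j < aa"
      proof
        fix j assume j: "j \<in> {1..m}"
        then have "j \<notin> S" using True by simp
        then show "y j < aa" using j by (auto simp: S_def)
      qed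
      then have "y \<in> Q0" using ext by (auto simp: Q0_def PiE_def Pi_def)
      then show ?thesis by simp
    next
      case False
      then obtain k where k: "k \<in> S" by auto
      then have Sk: "S = {k}" using cS fS card_le_Suc0_iff_eq[OF fS] by auto
      have "\<forall>j\<in>{1..m}. y j \<in> (if j = k then {x. aa \<le> x} else {x. x < aa})"
      proof
        fix j assume j: "j \<in> {1..m}"
        show "y j \<in> (if j = k then {x. aa \<le> x} else {x. x < aa})"
        proof (cases "j = k")
          case True then show ?thesis using k by (simp add: S_def)
        next
          case False
          then have "j \<notin> S" using Sk by simp
          then show ?thesis using j False by (auto simp: S_def)
        qed
      qed
      then have "y \<in> Q1 k" using ext unfolding Q1_def by (simp add: PiE_def Pi_def)
      moreover have "k \<in> {1..m}" using k by (simp add: S_def)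
      ultimately show ?thesis by blast
    qed
  qed
  have m0: "measure Om1 Q0 = q ^ m"
    unfolding Q0_def by (subst measure_Om1_PiE) (auto simp: DD_lt_a q_def)
  have m1: "measure Om1 (Q1 k) = (ss + rr) * q ^ (m - 1)" if k: "k \<in> {1..m}" for k
  proof -
    have "measure Om1 (Q1 k) = (\<Prod>j\<in>{1..m}. if j = k then ss + rr else q)"
      unfolding Q1_def by (subst measure_Om1_PiE) (auto simp: DD_lt_a DD_a q_def intro!: prod.cong)
    also have "\<dots> = (ss + rr) * (\<Prod>j\<in>{1..m} - {k}. q)"
      using k by (subst prod.remove[of _ k]) auto
    also have "\<dots> = (ss + rr) * q ^ (m - 1)" using k by simp
    finally show ?thesis .
  qed
  have "measure Om1 (space Om1 - {y\<in>space Om1. 2 \<le> La y}) \<le> measure Om1 (Q0 \<union> (\<Union>k\<in>{1..m}. Q1 k))"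
    using sub by (intro finite_measure_mono) auto
  also have "\<dots> \<le> measure Om1 Q0 + measure Om1 (\<Union>k\<in>{1..m}. Q1 k)"
    by (intro measure_Un_le) auto
  also have "measure Om1 (\<Union>k\<in>{1..m}. Q1 k) \<le> (\<Sum>k\<in>{1..m}. measure Om1 (Q1 k))"
    by (intro finite_measure_subadditive_finite) auto
  also have "(\<Sum>k\<in>{1..m}. measure Om1 (Q1 k)) = real m * (ss + rr) * q ^ (m - 1)"
    using m1 by simp
  finally have "measure Om1 (space Om1 - {y\<in>space Om1. 2 \<le> La y}) \<le> q ^ m + real m * (ss + rr) * q ^ (m - 1)"
    using m0 by simp
  also have "\<dots> \<le> 1/2" unfolding q_def by (rule numeric_p2)
  finally have "measure Om1 (space Om1 - {y\<in>space Om1. 2 \<le> La y}) \<le> 1/2" .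
  moreover have "measure Om1 (space Om1 - {y\<in>space Om1. 2 \<le> La y}) = 1 - measure Om1 {y\<in>space Om1. 2 \<le> La y}"
    by (intro prob_compl) measurable
  ultimately show ?thesis by simp
qed

end

context cst begin

lemma integrable_of_bool_Om1[intro]: "Measurable.pred Om1 P \<Longrightarrow> integrable Om1 (\<lambda>y. of_bool (P y) :: real)"
  by (intro finite_measure.integrable_const_bound[where B=1] prob_space.finite_measure prob_space_Om1) auto

lemma sum_of_bool_le: "L \<le> m \<Longrightarrow> (\<Sum>p\<in>{1..m}. of_bool (p \<le> L) :: real) = real L"
proof -
  assume L: "L \<le> m"
  have "{1..m} \<inter> {p. p \<le> L} = {1..L}" using L by auto
  then show ?thesis by simp
qed

lemma E_La: "integral\<^sup>L Om1 (\<lambda>y. real (La y)) = real m * (ss + rr)"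
proof -
  have "integral\<^sup>L Om1 (\<lambda>y. real (La y)) = integral\<^sup>L Om1 (\<lambda>y. \<Sum>k\<in>{1..m}. of_bool (aa \<le> y k))"
    by (simp only: cnt_real)
  also have "\<dots> = (\<Sum>k\<in>{1..m}. integral\<^sup>L Om1 (\<lambda>y. of_bool (aa \<le> y k)))"
    by (intro Bochner_Integration.integral_sum integrable_of_bool_Om1) measurable
  also have "\<dots> = (\<Sum>k\<in>{1..m}. ss + rr)"
  proof (intro sum.cong refl)
    fix k assume k: "k \<in> {1..m}"
    have "integral\<^sup>L Om1 (\<lambda>y. of_bool (aa \<le> y k)) = measure Om1 {y\<in>space Om1. aa \<le> y k}"
      using k by (intro integral_of_bool_Om1) measurable
    also have "\<dots> = measure Om1 {y\<in>space Om1. y k \<in> {x. aa \<le> x}}" by simp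
    also have "\<dots> = ss + rr" using k by (subst measure_Om1_single) (auto simp: DD_a)
    finally show "integral\<^sup>L Om1 (\<lambda>y. of_bool (aa \<le> y k)) = ss + rr" .
  qed
  finally show ?thesis by simp
qed

lemma sum_prob_La: "(\<Sum>p\<in>{1..m}. measure Om1 {y\<in>space Om1. p \<le> La y}) = real m * (ss + rr)"
proof -
  have "(\<Sum>p\<in>{1..m}. measure Om1 {y\<in>space Om1. p \<le> La y}) = (\<Sum>p\<in>{1..m}. integral\<^sup>L Om1 (\<lambda>y. of_bool (p \<le> La y)))"
    by (intro sum.cong refl integral_of_bool_Om1[symmetric]) measurable
  also have "\<dots> = integral\<^sup>L Om1 (\<lambda>y. \<Sum>p\<in>{1..m}. of_bool (p \<le> La y))"
    by (intro Bochner_Integration.integral_sum[symmetric] integrable_of_bool_Om1) measurable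
  also have "\<dots> = integral\<^sup>L Om1 (\<lambda>y. real (La y))"
    by (intro Bochner_Integration.integral_cong refl sum_of_bool_le cnt_le)
  finally show ?thesis using E_La by simp
qed

lemma prob_L1_2: "measure Om1 {y\<in>space Om1. 2 \<le> L1 y} \<le> (real m)^2 * rr^2"
proof -
  interpret prob_space Om1 by (rule prob_space_Om1)
  define PR where "PR = {(k, k'). k \<in> {1..m} \<and> k' \<in> {1..m} \<and> k \<noteq> k'}"
  define R where "R = (\<lambda>(k::nat, k'::nat). PiE {1..m} (\<lambda>j. if j = k \<or> j = k' then {x::real. 1 \<le> x} else UNIV))"
  have PRsub: "PR \<subseteq> {1..m} \<times> {1..m}" by (auto simp: PR_def)
  have finPR: "finite PR" using PRsub by (rule finite_subset) simp
  have cardPR: "card PR \<le> m^2" using card_mono[OF _ PRsub] by (simp add: power2_eq_square)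
  have Rsets: "R kk \<in> sets Om1" for kk
  proof (cases kk)
    case (Pair k k')
    show ?thesis unfolding Pair R_def prod.case by (rule PiE_Om1) auto
  qed
  have sub: "{y\<in>space Om1. 2 \<le> L1 y} \<subseteq> (\<Union>kk\<in>PR. R kk)"
  proof
    fix y assume y: "y \<in> {y\<in>space Om1. 2 \<le> L1 y}"
    define S where "S = {k\<in>{1..m}. 1 \<le> y k}"
    have "\<not> card S \<le> Suc 0" using y by (auto simp: S_def cnt_def)
    then obtain k k' where kk: "k \<in> S" "k' \<in> S" "k \<noteq> k'"
      using card_le_Suc0_iff_eq[of S] by (auto simp: S_def)
    have ext: "y \<in> extensional {1..m}" using y by (auto simp: space_Om1 PiE_def)
    have "y \<in> R (k, k')" using kk ext by (auto simp: R_def S_def PiE_def Pi_def)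
    moreover have "(k, k') \<in> PR" using kk by (auto simp: PR_def S_def)
    ultimately show "y \<in> (\<Union>kk\<in>PR. R kk)" by blast
  qed
  have mR: "measure Om1 (R kk) = rr^2" if "kk \<in> PR" for kk
  proof -
    obtain k k' where kk0: "kk = (k, k')" by (cases kk)
    have kk: "kk = (k, k')" "k \<in> {1..m}" "k' \<in> {1..m}" "k \<noteq> k'"
      using that kk0 by (auto simp: PR_def)
    have "measure Om1 (R kk) = (\<Prod>j\<in>{1..m}. if j = k \<or> j = k' then rr else 1)"
      unfolding kk R_def prod.case using prob_space.prob_space[OF prob_space_DD]
      by (subst measure_Om1_PiE) (auto simp: DD_1 intro!: prod.cong)
    also have "\<dots> = (\<Prod>j\<in>{1..m} \<inter> {j. j = k \<or> j = k'}. rr)"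
      by (subst prod.If_cases) auto
    also have "{1..m} \<inter> {j. j = k \<or> j = k'} = {k, k'}" using kk by auto
    finally show ?thesis using kk by (simp add: power2_eq_square)
  qed
  have "measure Om1 {y\<in>space Om1. 2 \<le> L1 y} \<le> measure Om1 (\<Union>kk\<in>PR. R kk)"
    using sub Rsets finPR by (intro finite_measure_mono) auto
  also have "\<dots> \<le> (\<Sum>kk\<in>PR. measure Om1 (R kk))"
    using Rsets finPR by (intro finite_measure_subadditive_finite) auto
  also have "\<dots> = real (card PR) * rr^2" using mR by simp
  also have "\<dots> \<le> (real m)^2 * rr^2"
    using cardPR by (intro mult_right_mono) (auto simp: of_nat_le_iff[symmetric] simp del: of_nat_le_iff)
  finally show ?thesis .
qed

abbreviation vv where "vv p y \<equiv> kth_largest m y p"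

lemma vv_supp: "y \<in> space Om1 \<Longrightarrow> \<forall>k\<in>{1..m}. y k \<in> {ee, aa, 1} \<Longrightarrow> 1 \<le> p \<Longrightarrow> p \<le> m \<Longrightarrow> vv p y \<in> {ee, aa, 1}"
  using kth_mem[of p m y] by auto

lemma vals: "ee \<ge> 0" "aa \<ge> 0" "ee \<le> 1" "aa \<le> 1" using ee_pos aa_pos ee_lt_aa aa_lt_1 by auto

lemma integrable_vv: "1 \<le> p \<Longrightarrow> p \<le> m \<Longrightarrow> integrable Om1 (vv p)"
proof -
  assume p: "1 \<le> p" "p \<le> m"
  show ?thesis
  proof (intro finite_measure.integrable_const_bound[where B=1] prob_space.finite_measure prob_space_Om1)
    show "AE y in Om1. norm (vv p y) \<le> 1"
      using AE_Om1 AE_space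
    proof eventually_elim
      case (elim y)
      then have "vv p y \<in> {ee, aa, 1}" using vv_supp[OF elim(2) elim(1) p] by simp
      then show ?case using vals by auto
    qed
  qed (use p in measurable)
qed

lemma E_vv_nonneg: "1 \<le> p \<Longrightarrow> p \<le> m \<Longrightarrow> integral\<^sup>L Om1 (vv p) \<ge> 0"
proof -
  assume p: "1 \<le> p" "p \<le> m"
  have "AE y in Om1. 0 \<le> vv p y"
    using AE_Om1 AE_space
  proof eventually_elim
    case (elim y)
    then have "vv p y \<in> {ee, aa, 1}" using vv_supp[OF elim(2) elim(1) p] by simp
    then show ?case using vals by auto
  qed
  then show ?thesis by (rule integral_nonneg_AE)
qed

lemma E_v1: "integral\<^sup>L Om1 (vv 1) \<ge> rr"
proof -
  have "rr = measure Om1 {y\<in>space Om1. y 1 \<in> {x. 1 \<le> x}}"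
    using m5 by (subst measure_Om1_single) (auto simp: DD_1)
  also have "\<dots> = integral\<^sup>L Om1 (\<lambda>y. of_bool (1 \<le> y 1))"
    using m5 by (subst integral_of_bool_Om1) auto
  also have "\<dots> \<le> integral\<^sup>L Om1 (vv 1)"
  proof (intro integral_mono_AE)
    show "integrable Om1 (vv 1)" using m5 by (intro integrable_vv) auto
    have [measurable]: "(\<lambda>y. y 1) \<in> borel_measurable Om1" using m5 by (intro comp_Om1) auto
    show "integrable Om1 (\<lambda>y. of_bool (1 \<le> y 1) :: real)" by (rule integrable_of_bool_Om1) measurable
    show "AE y in Om1. of_bool (1 \<le> y 1) \<le> vv 1 y"
      using AE_Om1 AE_space
    proof eventually_elim
      case (elim y)
      show ?case
      proof (cases "1 \<le> y 1")
        case True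
        then have "(1::nat) \<in> {k\<in>{1..m}. 1 \<le> y k}" using m5 by simp
        then have "{k\<in>{1..m}. 1 \<le> y k} \<noteq> {}" by blast
        then have "1 \<le> cnt m 1 y" unfolding cnt_def by (simp add: card_gt_0_iff Suc_le_eq)
        then have "1 \<le> vv 1 y" using kth_ge_iff[of 1 m 1 y] m5 by (simp add: cnt_def)
        then show ?thesis by simp
      next
        case False
        then show ?thesis using vv_supp[OF elim(2) elim(1), of 1] m5 vals by auto
      qed
    qed
  qed
  finally show ?thesis .
qed

lemma E_v2: "integral\<^sup>L Om1 (vv 2) \<le> aa + (real m)^2 * rr^2"
proof -
  interpret prob_space Om1 by (rule prob_space_Om1)
  have "integral\<^sup>L Om1 (vv 2) \<le> integral\<^sup>L Om1 (\<lambda>y. aa + of_bool (2 \<le> L1 y))"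
  proof (intro integral_mono_AE)
    show "integrable Om1 (vv 2)" using m5 by (intro integrable_vv) auto
    show "integrable Om1 (\<lambda>y. aa + of_bool (2 \<le> L1 y))"
      by (intro Bochner_Integration.integrable_add integrable_of_bool_Om1 integrable_const) measurable
    show "AE y in Om1. vv 2 y \<le> aa + of_bool (2 \<le> L1 y)"
      using AE_Om1 AE_space
    proof eventually_elim
      case (elim y)
      have v: "vv 2 y \<in> {ee, aa, 1}" using vv_supp[OF elim(2) elim(1), of 2] m5 by auto
      show ?case
      proof (cases "vv 2 y = 1")
        case True
        then have "2 \<le> L1 y" using kth_ge_iff[of 2 m 1 y] m5 by (simp add: cnt_def)
        then show ?thesis using True vals by simp
      next
        case False
        then show ?thesis using v vals ee_lt_aa by auto
      qed
    qed
  qed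
  also have "\<dots> = aa + measure Om1 {y\<in>space Om1. 2 \<le> L1 y}"
    by (subst Bochner_Integration.integral_add) (auto intro!: integrable_of_bool_Om1 simp: integral_of_bool_Om1 prob_space)
  also have "\<dots> \<le> aa + (real m)^2 * rr^2" using prob_L1_2 by simp
  finally show ?thesis .
qed

end

context cst begin

definition II :: "(nat \<times> nat) set" where "II = {1..nv} \<times> {1..m}"
definition Om :: "(nat \<times> nat \<Rightarrow> real) measure" where "Om = sample_space nv m DD"
definition blk :: "nat \<Rightarrow> (nat \<times> nat \<Rightarrow> real) \<Rightarrow> nat \<Rightarrow> real" where
  "blk i x = (\<lambda>k\<in>{1..m}. x (i, k))"

lemma Om_def': "Om = PiM II (\<lambda>_. DD)" by (simp add: Om_def sample_space_def II_def)
lemma finite_II: "finite II" by (simp add: II_def)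
lemma prob_space_Om: "prob_space Om" unfolding Om_def' by (intro prob_space_PiM prob_space_DD)
lemma space_Om: "space Om = PiE II (\<lambda>_. UNIV)" by (simp add: Om_def' space_PiM)

lemma comp_Om[measurable]: "c \<in> II \<Longrightarrow> (\<lambda>x. x c) \<in> borel_measurable Om"
proof -
  assume c: "c \<in> II"
  have "(\<lambda>x. x c) \<in> measurable Om DD" unfolding Om_def' using c by (rule measurable_component_singleton)
  then show ?thesis using measurable_cong_sets[OF refl sets_DD, of Om] by simp
qed

lemma blk_meas[measurable]: "i \<in> {1..nv} \<Longrightarrow> blk i \<in> measurable Om Om1"
  unfolding blk_def Om1_def
proof (intro measurable_restrict)
  fix k assume "i \<in> {1..nv}" "k \<in> {1..m}"
  then have "(\<lambda>x. x (i, k)) \<in> measurable Om DD" unfolding Om_def' by (intro measurable_component_singleton) (auto simp: II_def)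
  then show "(\<lambda>x. x (i, k)) \<in> measurable Om DD" .
qed

lemma distr_blk: "i \<in> {1..nv} \<Longrightarrow> distr Om Om1 (blk i) = Om1"
proof -
  assume i: "i \<in> {1..nv}"
  have "distr (PiM II (\<lambda>_. DD)) (\<Pi>\<^sub>M k\<in>{1..m}. DD) (\<lambda>\<omega>. \<lambda>k\<in>{1..m}. \<omega> (i, k)) = (\<Pi>\<^sub>M k\<in>{1..m}. DD)"
    using distr_PiM_reindex[of II "\<lambda>_. DD" "\<lambda>k. (i, k)" "{1..m}"] i prob_space_DD
    by (auto simp: II_def inj_on_def)
  then show ?thesis by (simp add: Om_def' Om1_def blk_def[abs_def])
qed

lemma integral_blk: fixes F :: "(nat \<Rightarrow> real) \<Rightarrow> real" shows "i \<in> {1..nv} \<Longrightarrow> F \<in> borel_measurable Om1 \<Longrightarrow>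
    integral\<^sup>L Om (\<lambda>x. F (blk i x)) = integral\<^sup>L Om1 F"
proof -
  assume i: "i \<in> {1..nv}" and F: "F \<in> borel_measurable Om1"
  have "integral\<^sup>L Om1 F = integral\<^sup>L (distr Om Om1 (blk i)) F" using distr_blk[OF i] by simp
  also have "\<dots> = integral\<^sup>L Om (\<lambda>x. F (blk i x))" using i F by (intro integral_distr) auto
  finally show ?thesis by simp
qed

lemma prob_blk: "i \<in> {1..nv} \<Longrightarrow> Measurable.pred Om1 P \<Longrightarrow>
    measure Om {x\<in>space Om. P (blk i x)} = measure Om1 {y\<in>space Om1. P y}"
proof -
  assume i: "i \<in> {1..nv}" and [measurable]: "Measurable.pred Om1 P"
  have "measure Om1 {y\<in>space Om1. P y} = measure (distr Om Om1 (blk i)) {y\<in>space Om1. P y}"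
    using distr_blk[OF i] by simp
  also have "\<dots> = measure Om (blk i -` {y\<in>space Om1. P y} \<inter> space Om)"
    using i by (intro measure_distr) auto
  also have "blk i -` {y\<in>space Om1. P y} \<inter> space Om = {x\<in>space Om. P (blk i x)}"
    using measurable_space[OF blk_meas[OF i]] by auto
  finally show ?thesis by simp
qed

lemma measure_Om_single: "c \<in> II \<Longrightarrow> A \<in> sets borel \<Longrightarrow> measure Om {x\<in>space Om. x c \<in> A} = measure DD A"
proof -
  assume c: "c \<in> II" and A: "A \<in> sets borel"
  have "distr Om DD (\<lambda>x. x c) = DD"
    unfolding Om_def' using c prob_space_DD by (intro distr_PiM_component) auto
  then have "measure DD A = measure (distr Om DD (\<lambda>x. x c)) A" by simp
  also have "\<dots> = measure Om ((\<lambda>x. x c) -` A \<inter> space Om)"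
    using c A by (intro measure_distr) (auto simp: Om_def' intro!: measurable_component_singleton)
  finally show ?thesis by (simp add: Int_def conj_commute)
qed

lemma AE_Om: "AE x in Om. \<forall>c\<in>II. x c \<in> {ee, aa, 1}"
  unfolding Om_def'
  by (intro AE_finite_allI finite_II AE_PiM_component[where P="\<lambda>x. x \<in> {ee,aa,1}"] prob_space_DD AE_DD) auto

lemma blk_space: "i \<in> {1..nv} \<Longrightarrow> x \<in> space Om \<Longrightarrow> blk i x \<in> space Om1"
  using measurable_space[OF blk_meas] by blast

lemma blk_vals: "i \<in> {1..nv} \<Longrightarrow> \<forall>c\<in>II. x c \<in> V \<Longrightarrow> \<forall>k\<in>{1..m}. blk i x k \<in> V"
  by (auto simp: blk_def II_def)

lemma indep_blk:
  assumes F: "\<And>i. i \<in> {1..nv} \<Longrightarrow> F i \<in> borel_measurable Om1"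
  shows "prob_space.indep_vars Om (\<lambda>_. borel) (\<lambda>i x. F i (blk i x)) {1..nv}"
proof -
  interpret prob_space Om by (rule prob_space_Om)
  have II_ne: "II \<noteq> {}" using nv_pos m5 by (auto simp: II_def)
  have coords: "indep_vars (\<lambda>_. DD) (\<lambda>c x. x c) II"
  proof (subst indep_vars_iff_distr_eq_PiM')
    show "II \<noteq> {}" by (rule II_ne)
    show "\<And>c. c \<in> II \<Longrightarrow> random_variable DD (\<lambda>x. x c)"
      unfolding Om_def' by (rule measurable_component_singleton)
    have "distr Om (PiM II (\<lambda>_. DD)) (\<lambda>x. \<lambda>c\<in>II. x c) = distr Om Om (\<lambda>x. x)"
      by (intro distr_cong) (auto simp: Om_def' space_PiM PiE_def extensional_def restrict_def fun_eq_iff)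
    also have "\<dots> = PiM II (\<lambda>c. distr Om DD (\<lambda>x. x c))"
      unfolding distr_id Om_def'
      by (intro PiM_cong refl distr_PiM_component[symmetric] prob_space_DD) auto
    finally show "distr Om (PiM II (\<lambda>_. DD)) (\<lambda>x. \<lambda>c\<in>II. x c) = PiM II (\<lambda>c. distr Om DD (\<lambda>x. x c))" .
  qed
  have restr: "indep_vars (\<lambda>i. PiM ({i} \<times> {1..m}) (\<lambda>_. DD)) (\<lambda>i \<omega>. restrict (\<lambda>c. \<omega> c) ({i} \<times> {1..m})) {1..nv}"
    by (rule indep_vars_restrict[OF coords]) (auto simp: II_def disjoint_family_on_def)
  define Y where "Y = (\<lambda>i z. F i (\<lambda>k\<in>{1..m}. z (i, k)))"
  have Ymeas: "Y i \<in> measurable (PiM ({i} \<times> {1..m}) (\<lambda>_. DD)) borel" if i: "i \<in> {1..nv}" for i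
  proof -
    have "(\<lambda>z. \<lambda>k\<in>{1..m}. z (i, k)) \<in> measurable (PiM ({i} \<times> {1..m}) (\<lambda>_. DD)) Om1"
      unfolding Om1_def by (intro measurable_restrict measurable_component_singleton) auto
    then show ?thesis unfolding Y_def using F[OF i] by (rule measurable_compose)
  qed
  have "indep_vars (\<lambda>_. borel) (\<lambda>i x. Y i (restrict (\<lambda>c. x c) ({i} \<times> {1..m}))) {1..nv}"
    by (rule indep_vars_compose2[OF restr Ymeas])
  moreover have "(\<lambda>x. Y i (restrict (\<lambda>c. x c) ({i} \<times> {1..m}))) = (\<lambda>x. F i (blk i x))" for i
    by (auto simp: Y_def blk_def restrict_def fun_eq_iff intro!: arg_cong[where f="F i"])
  ultimately show ?thesis by simp
qed

end

lemma sum_periodic: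
  fixes g :: "nat \<Rightarrow> real"
  assumes N: "N > 0"
  shows "(\<Sum>i\<in>{0..<N*T}. g (i mod N)) = real T * (\<Sum>c\<in>{0..<N}. g c)"
proof (induction T)
  case 0 then show ?case by simp
next
  case (Suc T)
  have "(\<Sum>i\<in>{0..<N * Suc T}. g (i mod N)) = (\<Sum>i\<in>{0..<N*T}. g (i mod N)) + (\<Sum>i\<in>{N*T..<N*T+N}. g (i mod N))"
    using sum.atLeastLessThan_concat[of 0 "N*T" "N*T+N" "\<lambda>i. g (i mod N)"] by (simp add: algebra_simps)
  also have "(\<Sum>i\<in>{N*T..<N*T+N}. g (i mod N)) = (\<Sum>i\<in>{0..<N}. g ((i + N*T) mod N))"
    using sum.shift_bounds_nat_ivl[of "\<lambda>i. g (i mod N)" 0 "N*T" N] by (simp add: add.commute)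
  also have "\<dots> = (\<Sum>i\<in>{0..<N}. g i)" by (intro sum.cong) auto
  finally show ?case using Suc by (simp add: algebra_simps)
qed

lemma sum_periodic1:
  fixes g :: "nat \<Rightarrow> real"
  assumes N: "N > 0"
  shows "(\<Sum>i\<in>{1..N*T}. g ((i - 1) mod N)) = real T * (\<Sum>c\<in>{0..<N}. g c)"
proof -
  have "(\<Sum>i\<in>{1..N*T}. g ((i - 1) mod N)) = (\<Sum>i\<in>{0..<N*T}. g (i mod N))"
  proof -
    have "{1..N*T} = Suc ` {0..<N*T}" by (auto simp: image_iff)
    moreover have "(\<Sum>i\<in>Suc ` {0..<N*T}. g ((i - 1) mod N)) = (\<Sum>i\<in>{0..<N*T}. g ((Suc i - 1) mod N))"
      by (subst sum.reindex) auto
    ultimately show ?thesis by simp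
  qed
  then show ?thesis using sum_periodic[OF N] by simp
qed

context cst begin

definition cc :: "nat \<Rightarrow> nat" where "cc i = (i - 1) mod (m - 1)"
definition tau :: "nat \<Rightarrow> nat \<Rightarrow> nat" where
  "tau c p = (if p = 1 then c + 2 else if p = 2 then 1 else if c + p \<le> m then c + p else c + p + 1 - m)"
definition sig :: "nat \<Rightarrow> nat \<Rightarrow> nat" where "sig i = tau (cc i)"

lemma cc_lt: "cc i < m - 1" unfolding cc_def using m5 by simp

lemma tau_inj: "c < m - 1 \<Longrightarrow> inj_on (tau c) {1..m}"
  unfolding inj_on_def tau_def by (auto split: if_splits)

lemma tau_into: "c < m - 1 \<Longrightarrow> tau c ` {1..m} \<subseteq> {1..m}"
  unfolding tau_def by auto

lemma tau_bij: "c < m - 1 \<Longrightarrow> bij_betw (tau c) {1..m} {1..m}"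
  unfolding bij_betw_def using tau_inj tau_into endo_inj_surj[of "{1..m}" "tau c"] by auto

lemma is_profile_sig: "is_profile nv m sig"
  unfolding is_profile_def sig_def using tau_bij cc_lt by auto

lemma pos_sig: "pos m sig i j = the_inv_into {1..m} (tau (cc i)) j"
  by (simp add: pos_def sig_def)

lemma pos_in: "j \<in> {1..m} \<Longrightarrow> pos m sig i j \<in> {1..m}"
  unfolding pos_sig using tau_bij[OF cc_lt, of i]
  by (intro the_inv_into_into) (auto simp: bij_betw_def)

lemma pos_1: "pos m sig i 1 = 2"
  unfolding pos_sig using tau_inj[OF cc_lt, of i] m5
  by (intro the_inv_into_f_eq) (auto simp: tau_def)

lemma pos_self: "pos m sig i (cc i + 2) = 1"
  unfolding pos_sig using tau_inj[OF cc_lt, of i] m5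
  by (intro the_inv_into_f_eq) (auto simp: tau_def)

lemma tau_pos: "c < m - 1 \<Longrightarrow> j \<in> {1..m} \<Longrightarrow> tau c (the_inv_into {1..m} (tau c) j) = j"
  using tau_bij[of c] by (intro f_the_inv_into_f) (auto simp: bij_betw_def)

lemma pos_inj:
  assumes j: "j \<in> {2..m}" and c: "c < m - 1" "c' < m - 1"
    and eq: "the_inv_into {1..m} (tau c) j = the_inv_into {1..m} (tau c') j"
  shows "c = c'"
proof -
  define p where "p = the_inv_into {1..m} (tau c) j"
  have e1: "tau c p = j" using tau_pos[OF c(1)] j by (simp add: p_def)
  have e2: "tau c' p = j" using tau_pos[OF c(2)] j eq by (simp add: p_def)
  show ?thesis using e1 e2 j c unfolding tau_def by (auto split: if_splits)
qed

lemma sum_voters: "(\<Sum>i\<in>{1..nv}. g (cc i)) = real tt * (\<Sum>c\<in>{0..<m-1}. g c)"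
  unfolding nv_def cc_def using m5 by (intro sum_periodic1) auto

end

context cst begin

lemma util_blk: "i \<in> {1..nv} \<Longrightarrow> util m sig x i j = vv (pos m sig i j) (blk i x)"
  unfolding util_def by (intro kth_cong) (auto simp: blk_def)

lemma util_meas[measurable]: "i \<in> {1..nv} \<Longrightarrow> j \<in> {1..m} \<Longrightarrow> (\<lambda>x. util m sig x i j) \<in> borel_measurable Om"
proof -
  assume i: "i \<in> {1..nv}" and j: "j \<in> {1..m}"
  have p: "1 \<le> pos m sig i j" "pos m sig i j \<le> m" using pos_in[OF j] by auto
  have "(\<lambda>x. vv (pos m sig i j) (blk i x)) \<in> borel_measurable Om"
    by (rule measurable_compose[OF blk_meas[OF i] kth_Om1[OF p]])
  then show ?thesis using util_blk[OF i] by simp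
qed

lemma sw_meas[measurable]: "j \<in> {1..m} \<Longrightarrow> (\<lambda>x. sw nv m sig x j) \<in> borel_measurable Om"
  unfolding sw_def by (intro borel_measurable_sum util_meas) auto

lemma maxsw_meas[measurable]: "(\<lambda>x. max_sw nv m sig x) \<in> borel_measurable Om"
  unfolding max_sw_def by (intro borel_measurable_Max sw_meas) auto

lemma dist_meas[measurable]: "j \<in> {1..m} \<Longrightarrow> (\<lambda>x. dist_alt nv m sig x j) \<in> borel_measurable Om"
  unfolding dist_alt_def by (intro borel_measurable_divide sw_meas maxsw_meas)

definition supp :: "(nat \<times> nat \<Rightarrow> real) \<Rightarrow> bool" where "supp x \<longleftrightarrow> (\<forall>c\<in>II. x c \<in> {ee, aa, 1})"

lemma AE_supp: "AE x in Om. supp x" using AE_Om by (simp add: supp_def)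

lemma util_supp: "supp x \<Longrightarrow> i \<in> {1..nv} \<Longrightarrow> j \<in> {1..m} \<Longrightarrow> util m sig x i j \<in> {ee, aa, 1}"
proof -
  assume x: "supp x" and i: "i \<in> {1..nv}" and j: "j \<in> {1..m}"
  have "util m sig x i j \<in> (\<lambda>k. x (i, k)) ` {1..m}"
    unfolding util_def using pos_in[OF j] by (intro kth_mem) auto
  then obtain k where k: "k \<in> {1..m}" "util m sig x i j = x (i, k)" by auto
  have "(i, k) \<in> II" using i k by (simp add: II_def)
  then show ?thesis using x k by (simp add: supp_def)
qed

lemma util_bounds: "supp x \<Longrightarrow> i \<in> {1..nv} \<Longrightarrow> j \<in> {1..m} \<Longrightarrow> ee \<le> util m sig x i j \<and> util m sig x i j \<le> 1"
  using util_supp[of x i j] ee_lt_aa aa_lt_1 ee_pos by auto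

lemma sw_ge: "supp x \<Longrightarrow> j \<in> {1..m} \<Longrightarrow> sw nv m sig x j \<ge> real nv * ee"
proof -
  assume x: "supp x" and j: "j \<in> {1..m}"
  have "(\<Sum>i\<in>{1..nv}. ee) \<le> (\<Sum>i\<in>{1..nv}. util m sig x i j)"
    using util_bounds[OF x _ j] by (intro sum_mono) auto
  then show ?thesis by (simp add: sw_def)
qed

lemma sw_le_max: "j \<in> {1..m} \<Longrightarrow> sw nv m sig x j \<le> max_sw nv m sig x"
  unfolding max_sw_def by (intro Max_ge) auto

lemma max_pos: "supp x \<Longrightarrow> max_sw nv m sig x > 0"
proof -
  assume x: "supp x"
  have "1 \<in> {1..m}" using m5 by simp
  have "0 < real nv * ee" using nv_pos ee_pos by simp
  also have "\<dots> \<le> sw nv m sig x 1" using sw_ge[OF x \<open>1 \<in> _\<close>] .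
  also have "\<dots> \<le> max_sw nv m sig x" using sw_le_max[OF \<open>1 \<in> _\<close>] .
  finally show ?thesis .
qed

lemma dist_bounds: "supp x \<Longrightarrow> j \<in> {1..m} \<Longrightarrow> 0 \<le> dist_alt nv m sig x j \<and> dist_alt nv m sig x j \<le> 1"
proof -
  assume x: "supp x" and j: "j \<in> {1..m}"
  have "0 \<le> sw nv m sig x j" using sw_ge[OF x j] nv_pos ee_pos by (smt (verit) mult_nonneg_nonneg of_nat_0_le_iff)
  then show ?thesis using sw_le_max[OF j, of x] max_pos[OF x]
    by (auto simp: dist_alt_def divide_le_eq_1)
qed

lemma integrable_util: "i \<in> {1..nv} \<Longrightarrow> j \<in> {1..m} \<Longrightarrow> integrable Om (\<lambda>x. util m sig x i j)"
proof -
  assume i: "i \<in> {1..nv}" and j: "j \<in> {1..m}"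
  show ?thesis
  proof (intro finite_measure.integrable_const_bound[where B=1] prob_space.finite_measure prob_space_Om)
    show "AE x in Om. norm (util m sig x i j) \<le> 1"
      using AE_supp by eventually_elim (use util_bounds[OF _ i j] ee_pos in force)
  qed (use i j in measurable)
qed

lemma integrable_dist: "j \<in> {1..m} \<Longrightarrow> integrable Om (\<lambda>x. dist_alt nv m sig x j)"
proof -
  assume j: "j \<in> {1..m}"
  show ?thesis
  proof (intro finite_measure.integrable_const_bound[where B=1] prob_space.finite_measure prob_space_Om)
    show "AE x in Om. norm (dist_alt nv m sig x j) \<le> 1"
      using AE_supp by eventually_elim (use dist_bounds[OF _ j] in force)
  qed (use j in measurable)
qed

lemma exp_sw_eq: "j \<in> {1..m} \<Longrightarrow> exp_sw nv m DD sig j = (\<Sum>i\<in>{1..nv}. integral\<^sup>L Om1 (vv (pos m sig i j)))"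
proof -
  assume j: "j \<in> {1..m}"
  have "exp_sw nv m DD sig j = integral\<^sup>L Om (\<lambda>x. \<Sum>i\<in>{1..nv}. util m sig x i j)"
    by (simp add: exp_sw_def Om_def sw_def)
  also have "\<dots> = (\<Sum>i\<in>{1..nv}. integral\<^sup>L Om (\<lambda>x. util m sig x i j))"
    using j by (intro Bochner_Integration.integral_sum integrable_util) auto
  also have "\<dots> = (\<Sum>i\<in>{1..nv}. integral\<^sup>L Om1 (vv (pos m sig i j)))"
  proof (intro sum.cong refl)
    fix i assume i: "i \<in> {1..nv}"
    have p: "1 \<le> pos m sig i j" "pos m sig i j \<le> m" using pos_in[OF j] by auto
    have "integral\<^sup>L Om (\<lambda>x. util m sig x i j) = integral\<^sup>L Om (\<lambda>x. vv (pos m sig i j) (blk i x))"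
      using util_blk[OF i] by simp
    also have "\<dots> = integral\<^sup>L Om1 (vv (pos m sig i j))"
      by (rule integral_blk[OF i kth_Om1[OF p]])
    finally show "integral\<^sup>L Om (\<lambda>x. util m sig x i j) = integral\<^sup>L Om1 (vv (pos m sig i j))" .
  qed
  finally show ?thesis .
qed

lemma exp_sw_1: "exp_sw nv m DD sig 1 \<le> real nv * (aa + (real m)^2 * rr^2)"
proof -
  have "exp_sw nv m DD sig 1 = (\<Sum>i\<in>{1..nv}. integral\<^sup>L Om1 (vv (pos m sig i 1)))"
    by (rule exp_sw_eq) (use m5 in auto)
  also have "\<dots> = (\<Sum>i\<in>{1..nv}. integral\<^sup>L Om1 (vv 2))" by (simp only: pos_1)
  also have "\<dots> \<le> (\<Sum>i\<in>{1..nv}. aa + (real m)^2 * rr^2)" by (intro sum_mono E_v2)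
  finally show ?thesis by simp
qed

lemma exp_sw_2: "exp_sw nv m DD sig 2 \<ge> real tt * rr"
proof -
  have "real tt * rr = real tt * (\<Sum>c\<in>{0..<m-1}. if c = 0 then rr else 0)"
    using m5 by simp
  also have "\<dots> = (\<Sum>i\<in>{1..nv}. if cc i = 0 then rr else 0)"
    by (rule sum_voters[symmetric])
  also have "\<dots> \<le> (\<Sum>i\<in>{1..nv}. integral\<^sup>L Om1 (vv (pos m sig i 2)))"
  proof (intro sum_mono)
    fix i assume i: "i \<in> {1..nv}"
    have p: "1 \<le> pos m sig i 2" "pos m sig i 2 \<le> m" using pos_in[of 2 i] m5 by auto
    show "(if cc i = 0 then rr else 0) \<le> integral\<^sup>L Om1 (vv (pos m sig i 2))"
    proof (cases "cc i = 0")
      case True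
      then have "pos m sig i 2 = 1" using pos_self[of i] by (simp only: True add_0)
      then show ?thesis using True E_v1 by simp
    next
      case False
      then show ?thesis using E_vv_nonneg[OF p] by simp
    qed
  qed
  also have "\<dots> = exp_sw nv m DD sig 2" using m5 by (subst exp_sw_eq) auto
  finally show ?thesis .
qed

lemma exp_sw_lt: "exp_sw nv m DD sig 1 < exp_sw nv m DD sig 2"
proof -
  have e1: "real nv * (real m)^2 * rr = 1" unfolding rr_def using nv_pos m5 by simp
  have e2: "real nv * aa \<le> real tt * rr / 4"
  proof -
    have "real nv \<le> real m * real tt" unfolding nv_def by (metis diff_le_self mult_le_mono1 of_nat_le_iff of_nat_mult)
    then have "real nv * rr \<le> real m * real tt * rr" using rr_pos by (intro mult_right_mono) auto
    then show ?thesis unfolding aa_def using m_pos by (simp add: field_simps)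
  qed
  have "real nv * (aa + (real m)^2 * rr^2) = real nv * aa + (real nv * (real m)^2 * rr) * rr"
    by (simp add: algebra_simps power2_eq_square)
  also have "\<dots> \<le> real tt * rr / 4 + rr" using e1 e2 by simp
  also have "\<dots> < real tt * rr" using tt_ge rr_pos by (simp add: field_simps)
  finally show ?thesis using exp_sw_1 exp_sw_2 by linarith
qed

end

context cst begin

lemma hoeff:
  assumes P: "\<And>i. i \<in> {1..nv} \<Longrightarrow> Measurable.pred Om1 (P i)" and eps: "\<epsilon> \<ge> 0"
  shows "measure Om {x\<in>space Om. (\<Sum>i\<in>{1..nv}. of_bool (P i (blk i x))) \<le> (\<Sum>i\<in>{1..nv}. measure Om1 {y\<in>space Om1. P i y}) - \<epsilon>} \<le> exp (-2 * \<epsilon>^2 / real nv)"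
    and "measure Om {x\<in>space Om. (\<Sum>i\<in>{1..nv}. of_bool (P i (blk i x))) \<ge> (\<Sum>i\<in>{1..nv}. measure Om1 {y\<in>space Om1. P i y}) + \<epsilon>} \<le> exp (-2 * \<epsilon>^2 / real nv)"
proof -
  interpret prob_space Om by (rule prob_space_Om)
  have ind: "indep_vars (\<lambda>_. borel) (\<lambda>i x. of_bool (P i (blk i x)) :: real) {1..nv}"
    using indep_blk[of "\<lambda>i y. of_bool (P i y) :: real"] P by auto
  interpret H: Hoeffding_ineq Om "{1..nv}" "\<lambda>i x. of_bool (P i (blk i x)) :: real" "\<lambda>_. 0" "\<lambda>_. 1"
      "\<Sum>i\<in>{1..nv}. expectation (\<lambda>x. of_bool (P i (blk i x)) :: real)"
    by unfold_locales (fact ind | simp | rule reflexive)+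
  have E: "expectation (\<lambda>x. of_bool (P i (blk i x)) :: real) = measure Om1 {y\<in>space Om1. P i y}"
    if i: "i \<in> {1..nv}" for i
  proof -
    have [measurable]: "Measurable.pred Om1 (P i)" by (rule P[OF i])
    have "expectation (\<lambda>x. of_bool (P i (blk i x)) :: real) = integral\<^sup>L Om1 (\<lambda>y. of_bool (P i y))"
      by (rule integral_blk[OF i]) measurable
    also have "\<dots> = measure Om1 {y\<in>space Om1. P i y}" by (rule integral_of_bool_Om1) measurable
    finally show ?thesis .
  qed
  have S: "(\<Sum>i\<in>{1..nv}. expectation (\<lambda>x. of_bool (P i (blk i x)) :: real)) = (\<Sum>i\<in>{1..nv}. measure Om1 {y\<in>space Om1. P i y})"
    using E by simp
  have d: "(\<Sum>i\<in>{1..nv}. ((1::real) - 0)\<^sup>2) = real nv" by simp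
  have pos: "(\<Sum>i\<in>{1..nv}. ((1::real) - 0)\<^sup>2) > 0" using nv_pos by simp
  show "measure Om {x\<in>space Om. (\<Sum>i\<in>{1..nv}. of_bool (P i (blk i x))) \<le> (\<Sum>i\<in>{1..nv}. measure Om1 {y\<in>space Om1. P i y}) - \<epsilon>} \<le> exp (-2 * \<epsilon>^2 / real nv)"
    using H.Hoeffding_ineq_le[OF eps pos] unfolding S d .
  show "measure Om {x\<in>space Om. (\<Sum>i\<in>{1..nv}. of_bool (P i (blk i x))) \<ge> (\<Sum>i\<in>{1..nv}. measure Om1 {y\<in>space Om1. P i y}) + \<epsilon>} \<le> exp (-2 * \<epsilon>^2 / real nv)"
    using H.Hoeffding_ineq_ge[OF eps pos] unfolding S d .
qed

definition N2 :: "(nat \<times> nat \<Rightarrow> real) \<Rightarrow> real" where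
  "N2 x = (\<Sum>i\<in>{1..nv}. of_bool (2 \<le> La (blk i x)))"
definition CNT :: "nat \<Rightarrow> (nat \<times> nat \<Rightarrow> real) \<Rightarrow> real" where
  "CNT j x = (\<Sum>i\<in>{1..nv}. of_bool (pos m sig i j \<le> La (blk i x)))"

lemma pred_blk: "i \<in> {1..nv} \<Longrightarrow> Measurable.pred Om1 P \<Longrightarrow> Measurable.pred Om (\<lambda>x. P (blk i x))"
  by (rule measurable_compose[OF blk_meas])

lemma sum_blk_meas: "(\<And>i. i \<in> {1..nv} \<Longrightarrow> Measurable.pred Om1 (P i)) \<Longrightarrow>
    (\<lambda>x. \<Sum>i\<in>{1..nv}. of_bool (P i (blk i x)) :: real) \<in> borel_measurable Om"
proof -
  assume P: "\<And>i. i \<in> {1..nv} \<Longrightarrow> Measurable.pred Om1 (P i)"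
  show ?thesis
  proof (intro borel_measurable_sum)
    fix i assume i: "i \<in> {1..nv}"
    have "Measurable.pred Om (\<lambda>x. P i (blk i x))" by (rule pred_blk[OF i P[OF i]])
    then show "(\<lambda>x. of_bool (P i (blk i x)) :: real) \<in> borel_measurable Om" by measurable
  qed
qed

lemma N2_meas[measurable]: "N2 \<in> borel_measurable Om"
  unfolding N2_def[abs_def] by (rule sum_blk_meas) simp

lemma CNT_meas[measurable]: "CNT j \<in> borel_measurable Om"
  unfolding CNT_def[abs_def] by (rule sum_blk_meas) simp

lemma exp_nv8: "exp (-2 * (real nv / 4)^2 / real nv) \<le> 1 / real m"
proof -
  have "real nv \<ge> 8 * real m"
  proof -
    have "(5::real)^2 \<le> (real m)^2" by (rule power_mono) (use m_pos in auto)
    then have "2 * real m \<le> (real m)^2 * real m" using m_pos by (intro mult_right_mono) auto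
    moreover have "real tt = (real m)^2 * real m" unfolding tt_def by (simp add: power2_eq_square power3_eq_cube)
    ultimately have "real tt \<ge> 2 * real m" by simp
    then show ?thesis using nv_ge by linarith
  qed
  then have "real m \<le> 1 + real nv / 8" by simp
  also have "\<dots> \<le> exp (real nv / 8)" by (rule exp_ge_add_one_self)
  finally have A: "real m \<le> exp (real nv / 8)" .
  have "-2 * (real nv / 4)^2 / real nv = - (real nv / 8)" using nv_pos by (simp add: power2_eq_square field_simps)
  then have "exp (-2 * (real nv / 4)^2 / real nv) = inverse (exp (real nv / 8))" by (simp add: exp_minus)
  also have "\<dots> \<le> inverse (real m)" using A m_pos by (intro le_imp_inverse_le) auto
  finally show ?thesis by (simp only: inverse_eq_divide)
qed

lemma exp_tt: "exp (-2 * (real tt)^2 / real nv) \<le> 1 / (real m)^2"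
proof -
  have nv_eq: "real nv = (real m - 1) * real tt" unfolding nv_def using m5 by (simp add: of_nat_diff)
  have t0: "real tt > 0" using tt_ge by simp
  have m1: "real m - 1 > 0" using m_pos by simp
  have A: "2 * (real tt)^2 / real nv = 2 * real tt / (real m - 1)"
    unfolding nv_eq using t0 m1 by (simp add: power2_eq_square field_simps)
  have "(real m)^2 \<le> 2 * real tt / (real m - 1)"
  proof -
    have "(real m)^2 * (real m - 1) \<le> 2 * real tt" unfolding tt_def using m_pos
      by (simp add: power2_eq_square power3_eq_cube algebra_simps)
    then show ?thesis using m_pos by (simp add: field_simps)
  qed
  also have "\<dots> \<le> exp (2 * real tt / (real m - 1))" using exp_ge_add_one_self[of "2 * real tt / (real m - 1)"] by linarith
  finally have B: "(real m)^2 \<le> exp (2 * (real tt)^2 / real nv)" using A by simp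
  have "exp (-2 * (real tt)^2 / real nv) = inverse (exp (2 * (real tt)^2 / real nv))" by (simp add: exp_minus)
  also have "\<dots> \<le> inverse ((real m)^2)" using B m_pos by (intro le_imp_inverse_le) auto
  finally show ?thesis by (simp only: inverse_eq_divide)
qed

lemma bad2: "measure Om {x\<in>space Om. N2 x < real nv / 4} \<le> 1 / real m"
proof -
  interpret prob_space Om by (rule prob_space_Om)
  define mu2 where "mu2 = (\<Sum>i\<in>{1..nv}. measure Om1 {y\<in>space Om1. 2 \<le> La y})"
  have mu: "mu2 \<ge> real nv / 2"
  proof -
    have "(\<Sum>i\<in>{1..nv}. (1::real)/2) \<le> (\<Sum>i\<in>{1..nv}. measure Om1 {y\<in>space Om1. 2 \<le> La y})"
      by (intro sum_mono prob_La2)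
    then show ?thesis by (simp add: mu2_def)
  qed
  have "{x\<in>space Om. N2 x < real nv / 4} \<subseteq> {x\<in>space Om. N2 x \<le> mu2 - real nv / 4}"
    using mu by auto
  then have "measure Om {x\<in>space Om. N2 x < real nv / 4} \<le> measure Om {x\<in>space Om. N2 x \<le> mu2 - real nv / 4}"
    by (intro finite_measure_mono) measurable
  also have "\<dots> \<le> exp (-2 * (real nv / 4)^2 / real nv)"
    unfolding N2_def mu2_def by (rule hoeff(1)[where P="\<lambda>i y. 2 \<le> La y"]) auto
  also have "\<dots> \<le> 1 / real m" by (rule exp_nv8)
  finally show ?thesis .
qed

lemma mu_cnt: "j \<in> {2..m} \<Longrightarrow> (\<Sum>i\<in>{1..nv}. measure Om1 {y\<in>space Om1. pos m sig i j \<le> La y}) \<le> 5 * real tt"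
proof -
  assume j: "j \<in> {2..m}"
  define phi where "phi = (\<lambda>p. measure Om1 {y\<in>space Om1. p \<le> La y})"
  define h where "h = (\<lambda>c. the_inv_into {1..m} (tau c) j)"
  have "(\<Sum>i\<in>{1..nv}. measure Om1 {y\<in>space Om1. pos m sig i j \<le> La y}) = (\<Sum>i\<in>{1..nv}. phi (h (cc i)))"
    by (simp add: phi_def h_def pos_sig)
  also have "\<dots> = real tt * (\<Sum>c\<in>{0..<m-1}. phi (h c))" by (rule sum_voters)
  also have "(\<Sum>c\<in>{0..<m-1}. phi (h c)) = (\<Sum>p\<in>h ` {0..<m-1}. phi p)"
  proof -
    have "inj_on h {0..<m-1}" unfolding inj_on_def h_def using pos_inj[OF j] by auto
    then show ?thesis by (simp add: sum.reindex)
  qed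
  also have "\<dots> \<le> (\<Sum>p\<in>{1..m}. phi p)"
  proof (intro sum_mono2)
    show "h ` {0..<m-1} \<subseteq> {1..m}"
    proof
      fix p assume "p \<in> h ` {0..<m-1}"
      then obtain c where c: "c < m - 1" "p = h c" by auto
      show "p \<in> {1..m}" unfolding c h_def using tau_bij[OF c(1)] j
        by (intro the_inv_into_into) (auto simp: bij_betw_def)
    qed
  qed (auto simp: phi_def)
  also have "\<dots> = real m * (ss + rr)" unfolding phi_def by (rule sum_prob_La)
  also have "\<dots> \<le> 5" using m_rr m_pos by (simp add: ss_def field_simps)
  finally show ?thesis using tt_ge by (simp add: mult_left_mono)
qed

lemma bad3: "j \<in> {2..m} \<Longrightarrow> measure Om {x\<in>space Om. 6 * real tt \<le> CNT j x} \<le> 1 / (real m)^2"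
proof -
  assume j: "j \<in> {2..m}"
  interpret prob_space Om by (rule prob_space_Om)
  define mu3 where "mu3 = (\<Sum>i\<in>{1..nv}. measure Om1 {y\<in>space Om1. pos m sig i j \<le> La y})"
  have mu: "mu3 \<le> 5 * real tt" unfolding mu3_def by (rule mu_cnt[OF j])
  have "{x\<in>space Om. 6 * real tt \<le> CNT j x} \<subseteq> {x\<in>space Om. CNT j x \<ge> mu3 + real tt}"
    using mu by auto
  then have "measure Om {x\<in>space Om. 6 * real tt \<le> CNT j x} \<le> measure Om {x\<in>space Om. CNT j x \<ge> mu3 + real tt}"
    by (intro finite_measure_mono) measurable
  also have "\<dots> \<le> exp (-2 * (real tt)^2 / real nv)"
    unfolding CNT_def mu3_def by (rule hoeff(2)[where P="\<lambda>i y. pos m sig i j \<le> La y"]) auto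
  also have "\<dots> \<le> 1 / (real m)^2" by (rule exp_tt)
  finally show ?thesis .
qed

lemma bad1: "measure Om {x\<in>space Om. \<exists>c\<in>II. 1 \<le> x c} \<le> 1 / real m"
proof -
  interpret prob_space Om by (rule prob_space_Om)
  have "{x\<in>space Om. \<exists>c\<in>II. 1 \<le> x c} = (\<Union>c\<in>II. {x\<in>space Om. x c \<in> {x. 1 \<le> x}})" by auto
  then have "measure Om {x\<in>space Om. \<exists>c\<in>II. 1 \<le> x c} \<le> (\<Sum>c\<in>II. measure Om {x\<in>space Om. x c \<in> {x. 1 \<le> x}})"
    using finite_II by (simp only:) (intro finite_measure_subadditive_finite, auto)
  also have "\<dots> = (\<Sum>c\<in>II. rr)"
  proof (intro sum.cong refl)
    fix c assume "c \<in> II"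
    then show "measure Om {x\<in>space Om. x c \<in> {x. 1 \<le> x}} = rr"
      using measure_Om_single[of c "{x. 1 \<le> x}"] DD_1 by simp
  qed
  also have "\<dots> = real nv * real m * rr" by (simp add: II_def)
  also have "\<dots> = 1 / real m" unfolding rr_def using nv_pos m5 by (simp add: power2_eq_square field_simps)
  finally show ?thesis .
qed

end

context cst begin

lemma good_vv:
  assumes x: "supp x" "\<forall>c\<in>II. x c < 1" and i: "i \<in> {1..nv}" and p: "p \<in> {1..m}"
  shows "vv p (blk i x) \<in> {ee, aa}"
proof -
  have "vv p (blk i x) \<in> (blk i x) ` {1..m}" using p by (intro kth_mem) auto
  then obtain k where k: "k \<in> {1..m}" "vv p (blk i x) = x (i, k)" by (auto simp: blk_def)
  have "(i, k) \<in> II" using i k by (simp add: II_def)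
  then have "x (i, k) \<in> {ee, aa, 1}" "x (i, k) < 1" using x by (auto simp: supp_def)
  then show ?thesis using k by auto
qed

lemma vv_aa_iff: "p \<in> {1..m} \<Longrightarrow> aa \<le> vv p y \<longleftrightarrow> p \<le> La y"
  using kth_ge_iff[of p m aa y] by (simp add: cnt_def)

lemma good_bounds:
  assumes x: "supp x" "\<forall>c\<in>II. x c < 1" "real nv / 4 \<le> N2 x" "\<forall>j\<in>{2..m}. CNT j x < 6 * real tt"
  shows "sw nv m sig x 1 \<ge> aa * real nv / 4"
    and "\<And>j. j \<in> {2..m} \<Longrightarrow> sw nv m sig x j \<le> 7 * real tt * aa"
proof -
  have "aa * real nv / 4 \<le> aa * N2 x" using x(3) aa_pos by (simp add: mult_left_mono)
  also have "aa * N2 x = (\<Sum>i\<in>{1..nv}. aa * of_bool (2 \<le> La (blk i x)))"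
    by (simp add: N2_def sum_distrib_left)
  also have "\<dots> \<le> (\<Sum>i\<in>{1..nv}. util m sig x i 1)"
  proof (intro sum_mono)
    fix i assume i: "i \<in> {1..nv}"
    have u: "util m sig x i 1 = vv 2 (blk i x)" using util_blk[OF i] pos_1 by simp
    have two: "(2::nat) \<in> {1..m}" using m5 by simp
    have v: "vv 2 (blk i x) \<in> {ee, aa}" by (rule good_vv[OF x(1,2) i two])
    show "aa * of_bool (2 \<le> La (blk i x)) \<le> util m sig x i 1"
      using vv_aa_iff[OF two, of "blk i x"] v ee_pos aa_pos unfolding u by auto
  qed
  also have "\<dots> = sw nv m sig x 1" by (simp add: sw_def)
  finally show "sw nv m sig x 1 \<ge> aa * real nv / 4" .
next
  fix j assume j: "j \<in> {2..m}"
  have j': "j \<in> {1..m}" using j by simp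
  have "sw nv m sig x j = (\<Sum>i\<in>{1..nv}. util m sig x i j)" by (simp add: sw_def)
  also have "\<dots> \<le> (\<Sum>i\<in>{1..nv}. aa * of_bool (pos m sig i j \<le> La (blk i x)) + ee)"
  proof (intro sum_mono)
    fix i assume i: "i \<in> {1..nv}"
    have p: "pos m sig i j \<in> {1..m}" by (rule pos_in[OF j'])
    have v: "vv (pos m sig i j) (blk i x) \<in> {ee, aa}" by (rule good_vv[OF x(1,2) i p])
    show "util m sig x i j \<le> aa * of_bool (pos m sig i j \<le> La (blk i x)) + ee"
      using vv_aa_iff[OF p, of "blk i x"] v ee_pos aa_pos ee_lt_aa unfolding util_blk[OF i] by auto
  qed
  also have "\<dots> = aa * CNT j x + real nv * ee" by (simp add: CNT_def sum.distrib sum_distrib_left)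
  also have "\<dots> \<le> aa * (6 * real tt) + real tt * aa"
  proof (intro add_mono)
    have "CNT j x < 6 * real tt" using x(4) j by blast
    then show "aa * CNT j x \<le> aa * (6 * real tt)" using aa_pos by (intro mult_left_mono) auto
    have "real nv \<le> real m * real tt" unfolding nv_def by (metis diff_le_self mult_le_mono1 of_nat_le_iff of_nat_mult)
    then have "real nv * ee \<le> real m * real tt * ee" using ee_pos by (intro mult_right_mono) auto
    also have "\<dots> = real tt * aa" unfolding ee_def using m_pos by simp
    finally show "real nv * ee \<le> real tt * aa" .
  qed
  also have "\<dots> = 7 * real tt * aa" by simp
  finally show "sw nv m sig x j \<le> 7 * real tt * aa" .
qed

lemma good_dist:
  assumes x: "supp x" "\<forall>c\<in>II. x c < 1" "real nv / 4 \<le> N2 x" "\<forall>j\<in>{2..m}. CNT j x < 6 * real tt"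
  shows "\<And>j. j \<in> {2..m} \<Longrightarrow> dist_alt nv m sig x j \<le> 35 / real m"
    and "dist_alt nv m sig x 1 \<ge> 1 / 8"
proof -
  have one: "(1::nat) \<in> {1..m}" using m5 by simp
  have s1: "sw nv m sig x 1 \<ge> aa * real nv / 4" by (rule good_bounds(1)[OF x])
  have pos4: "aa * real nv / 4 > 0" using aa_pos nv_pos by simp
  have mx: "max_sw nv m sig x \<ge> aa * real nv / 4" using s1 sw_le_max[OF one, of x] by linarith
  {
    fix j assume j: "j \<in> {2..m}"
    have j': "j \<in> {1..m}" using j by simp
    have sj: "sw nv m sig x j \<le> 7 * real tt * aa" by (rule good_bounds(2)[OF x j])
    have sj0: "sw nv m sig x j \<ge> 0" using sw_ge[OF x(1) j'] nv_pos ee_pos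
      by (smt (verit) mult_nonneg_nonneg of_nat_0_le_iff)
    have "dist_alt nv m sig x j = sw nv m sig x j / max_sw nv m sig x" by (simp add: dist_alt_def)
    also have "\<dots> \<le> sw nv m sig x j / (aa * real nv / 4)"
      using mx pos4 sj0 by (intro divide_left_mono) auto
    also have "\<dots> \<le> (7 * real tt * aa) / (aa * real nv / 4)"
      using sj pos4 by (intro divide_right_mono) auto
    also have "\<dots> = 28 / (real m - 1)"
    proof -
      have nv_eq: "real nv = (real m - 1) * real tt" unfolding nv_def using m5 by (simp add: of_nat_diff)
      have m1: "real m - 1 > 0" using m_pos by simp
      have t0: "real tt > 0" using tt_ge by simp
      show ?thesis unfolding nv_eq using aa_pos t0 m1 by (simp add: field_simps)
    qed
    also have "\<dots> \<le> 35 / real m" using m_pos by (simp add: field_simps)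
    finally show "dist_alt nv m sig x j \<le> 35 / real m" .
  }
  have "max_sw nv m sig x \<le> sw nv m sig x 1 + 7 * real tt * aa"
    unfolding max_sw_def
  proof (intro Max.boundedI)
    show "finite ((\<lambda>k. sw nv m sig x k) ` {1..m})" by simp
    show "(\<lambda>k. sw nv m sig x k) ` {1..m} \<noteq> {}" using one by blast
    fix s assume "s \<in> (\<lambda>k. sw nv m sig x k) ` {1..m}"
    then obtain k where k: "k \<in> {1..m}" "s = sw nv m sig x k" by auto
    show "s \<le> sw nv m sig x 1 + 7 * real tt * aa"
    proof (cases "k = 1")
      case True then show ?thesis using k tt_ge aa_pos by simp
    next
      case False
      then have "k \<in> {2..m}" using k by auto
      then show ?thesis using k good_bounds(2)[OF x, of k] s1 pos4 by linarith
    qed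
  qed
  also have "\<dots> \<le> 8 * sw nv m sig x 1"
  proof -
    have "real tt * aa \<le> aa * real nv / 4" using nv_ge aa_pos by (simp add: field_simps mult_left_mono)
    then show ?thesis using s1 by linarith
  qed
  finally have "max_sw nv m sig x \<le> 8 * sw nv m sig x 1" .
  moreover have "max_sw nv m sig x > 0" by (rule max_pos[OF x(1)])
  ultimately show "dist_alt nv m sig x 1 \<ge> 1 / 8"
    unfolding dist_alt_def by (simp add: le_divide_eq)
qed

end

context cst begin

definition BAD where
  "BAD = {x\<in>space Om. (\<exists>c\<in>II. 1 \<le> x c) \<or> N2 x < real nv / 4 \<or> (\<exists>j\<in>{2..m}. 6 * real tt \<le> CNT j x)}"

lemma BAD_sets[measurable]: "BAD \<in> sets Om"
proof -
  have [measurable]: "Measurable.pred Om (\<lambda>x. \<exists>c\<in>II. 1 \<le> x c)"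
    using finite_II by measurable
  show ?thesis unfolding BAD_def by measurable
qed

lemma BAD_measure: "measure Om BAD \<le> 3 / real m"
proof -
  interpret prob_space Om by (rule prob_space_Om)
  define B1 where "B1 = {x\<in>space Om. \<exists>c\<in>II. 1 \<le> x c}"
  define B2 where "B2 = {x\<in>space Om. N2 x < real nv / 4}"
  define B3 where "B3 = (\<lambda>j. {x\<in>space Om. 6 * real tt \<le> CNT j x})"
  have [measurable]: "Measurable.pred Om (\<lambda>x. \<exists>c\<in>II. 1 \<le> x c)"
    using finite_II by measurable
  have [measurable]: "B1 \<in> sets Om" "B2 \<in> sets Om" "B3 j \<in> sets Om" for j
    unfolding B1_def B2_def B3_def by measurable
  have "BAD = B1 \<union> B2 \<union> (\<Union>j\<in>{2..m}. B3 j)" by (auto simp: BAD_def B1_def B2_def B3_def)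
  then have "measure Om BAD \<le> measure Om (B1 \<union> B2) + measure Om (\<Union>j\<in>{2..m}. B3 j)"
    by (simp add: measure_Un_le)
  also have "measure Om (B1 \<union> B2) \<le> measure Om B1 + measure Om B2" by (simp add: measure_Un_le)
  also have "measure Om (\<Union>j\<in>{2..m}. B3 j) \<le> (\<Sum>j\<in>{2..m}. measure Om (B3 j))"
    by (intro finite_measure_subadditive_finite) auto
  also have "(\<Sum>j\<in>{2..m}. measure Om (B3 j)) \<le> (\<Sum>j\<in>{2..m}. 1 / (real m)^2)"
    unfolding B3_def by (intro sum_mono bad3)
  also have "(\<Sum>j\<in>{2..m}. 1 / (real m)^2) = real (m - 1) / (real m)^2" by simp
  also have "\<dots> \<le> 1 / real m" using m_pos by (simp add: of_nat_diff power2_eq_square field_simps)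
  finally have "measure Om BAD \<le> measure Om B1 + measure Om B2 + 1 / real m" by linarith
  moreover have "measure Om B1 \<le> 1 / real m" unfolding B1_def by (rule bad1)
  moreover have "measure Om B2 \<le> 1 / real m" unfolding B2_def by (rule bad2)
  ultimately show ?thesis by simp
qed

lemma not_BAD: "x \<in> space Om \<Longrightarrow> x \<notin> BAD \<Longrightarrow>
  (\<forall>c\<in>II. x c < 1) \<and> real nv / 4 \<le> N2 x \<and> (\<forall>j\<in>{2..m}. CNT j x < 6 * real tt)"
  by (auto simp: BAD_def not_le)

lemma E_dist_B: "j \<in> {2..m} \<Longrightarrow> exp_dist nv m DD sig j \<le> 38 / real m"
proof -
  assume j: "j \<in> {2..m}"
  have j': "j \<in> {1..m}" using j by simp
  interpret prob_space Om by (rule prob_space_Om)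
  have "exp_dist nv m DD sig j = integral\<^sup>L Om (\<lambda>x. dist_alt nv m sig x j)"
    by (simp add: exp_dist_def Om_def)
  also have "\<dots> \<le> integral\<^sup>L Om (\<lambda>x. 35 / real m + indicator BAD x)"
  proof (intro integral_mono_AE integrable_dist[OF j'])
    show "integrable Om (\<lambda>x. 35 / real m + indicator BAD x :: real)"
      by (intro Bochner_Integration.integrable_add integrable_const integrable_real_indicator) (auto simp: emeasure_eq_measure)
    show "AE x in Om. dist_alt nv m sig x j \<le> 35 / real m + indicator BAD x"
      using AE_supp AE_space
    proof eventually_elim
      case (elim x)
      show ?case
      proof (cases "x \<in> BAD")
        case True
        have c: "35 / real m \<ge> 0" using m_pos by simp
        have d: "dist_alt nv m sig x j \<le> 1" using dist_bounds[OF elim(1) j'] by simp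
        have "indicator BAD x = (1::real)" using True by simp
        then show ?thesis using c d by linarith
      next
        case False
        have "dist_alt nv m sig x j \<le> 35 / real m"
          using good_dist(1)[OF elim(1) _ _ _ j] not_BAD[OF elim(2) False] by blast
        then show ?thesis using False by simp
      qed
    qed
  qed
  also have "\<dots> = 35 / real m + measure Om BAD"
    by (subst Bochner_Integration.integral_add) (auto simp: prob_space emeasure_eq_measure)
  also have "\<dots> \<le> 38 / real m" using BAD_measure by simp
  finally show ?thesis .
qed

lemma E_dist_A: "exp_dist nv m DD sig 1 \<ge> 1 / 20"
proof -
  have one: "(1::nat) \<in> {1..m}" using m5 by simp
  interpret prob_space Om by (rule prob_space_Om)
  have "1 / 20 \<le> (1 / 8) * (1 - 3 / real m)" using m_pos by (simp add: field_simps)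
  also have "\<dots> \<le> (1 / 8) * (1 - measure Om BAD)" using BAD_measure by simp
  also have "\<dots> = integral\<^sup>L Om (\<lambda>x. (1 / 8) * (1 - indicator BAD x))"
    by (simp add: Bochner_Integration.integral_diff prob_space emeasure_eq_measure)
  also have "\<dots> \<le> integral\<^sup>L Om (\<lambda>x. dist_alt nv m sig x 1)"
  proof (intro integral_mono_AE integrable_dist[OF one])
    show "integrable Om (\<lambda>x. (1 / 8) * (1 - indicator BAD x) :: real)"
      by (intro integrable_mult_right Bochner_Integration.integrable_diff integrable_const integrable_real_indicator)
         (auto simp: emeasure_eq_measure)
    show "AE x in Om. (1 / 8) * (1 - indicator BAD x) \<le> dist_alt nv m sig x 1"
      using AE_supp AE_space
    proof eventually_elim
      case (elim x)
      show ?case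
      proof (cases "x \<in> BAD")
        case True
        then show ?thesis using dist_bounds[OF elim(1) one] by simp
      next
        case False
        have "dist_alt nv m sig x 1 \<ge> 1 / 8"
          using good_dist(2)[OF elim(1)] not_BAD[OF elim(2) False] by blast
        then show ?thesis using False by simp
      qed
    qed
  qed
  also have "\<dots> = exp_dist nv m DD sig 1" by (simp add: exp_dist_def Om_def)
  finally show ?thesis .
qed

lemma AE_maxpos: "AE x in sample_space nv m DD. max_sw nv m sig x > 0"
  using AE_supp unfolding Om_def by eventually_elim (rule max_pos)

end

theorem theorem2:
  shows "\<exists>C::real. C > 0 \<and>
    (\<forall>m::nat. m \<ge> 5 \<longrightarrow>
      (\<exists>n::nat. \<exists>D::real measure. \<exists>\<sigma>.
         n \<ge> 1 \<and> distr_on_unit D \<and> is_profile n m \<sigma> \<and>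
         (AE x in sample_space n m D. max_sw n m \<sigma> x > 0) \<and>
         (\<forall>f. ewm_rule n m D f \<longrightarrow>
            exp_dist n m D \<sigma> (f \<sigma>) \<le> C / real m * Max ((\<lambda>j. exp_dist n m D \<sigma> j) ` {1..m}))))"
proof (intro exI[of _ "760::real"] conjI allI impI)
  show "(0::real) < 760" by simp
  fix m :: nat assume m5: "5 \<le> m"
  interpret cst m by unfold_locales (rule m5)
  show "\<exists>n D \<sigma>. n \<ge> 1 \<and> distr_on_unit D \<and> is_profile n m \<sigma> \<and>
         (AE x in sample_space n m D. max_sw n m \<sigma> x > 0) \<and>
         (\<forall>f. ewm_rule n m D f \<longrightarrow>
            exp_dist n m D \<sigma> (f \<sigma>) \<le> 760 / real m * Max ((\<lambda>j. exp_dist n m D \<sigma> j) ` {1..m}))"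
  proof (intro exI[of _ nv] exI[of _ DD] exI[of _ sig] conjI allI impI)
    show "1 \<le> nv" using nv_pos by simp
    show "distr_on_unit DD" by (rule distr_on_unit_DD)
    show "is_profile nv m sig" by (rule is_profile_sig)
    show "AE x in sample_space nv m DD. max_sw nv m sig x > 0" by (rule AE_maxpos)
    fix f assume f: "ewm_rule nv m DD f"
    have fs: "f sig \<in> {1..m}" and fmax: "\<And>j. j \<in> {1..m} \<Longrightarrow> exp_sw nv m DD sig j \<le> exp_sw nv m DD sig (f sig)"
      using f is_profile_sig unfolding ewm_rule_def by auto
    have "exp_sw nv m DD sig 2 \<le> exp_sw nv m DD sig (f sig)" using fmax m5 by simp
    then have "f sig \<noteq> 1" using exp_sw_lt by auto
    then have f2: "f sig \<in> {2..m}" using fs by auto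
    have "exp_dist nv m DD sig (f sig) \<le> 38 / real m" by (rule E_dist_B[OF f2])
    also have "\<dots> = 760 / real m * (1 / 20)" by simp
    also have "\<dots> \<le> 760 / real m * exp_dist nv m DD sig 1"
      using E_dist_A m_pos by (intro mult_left_mono) auto
    also have "exp_dist nv m DD sig 1 \<le> Max ((\<lambda>j. exp_dist nv m DD sig j) ` {1..m})"
      using m5 by (intro Max_ge) auto
    then have "760 / real m * exp_dist nv m DD sig 1 \<le> 760 / real m * Max ((\<lambda>j. exp_dist nv m DD sig j) ` {1..m})"
      using m_pos by (intro mult_left_mono) auto
    finally show "exp_dist nv m DD sig (f sig) \<le> 760 / real m * Max ((\<lambda>j. exp_dist nv m DD sig j) ` {1..m})" .
  qed
qed


end
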